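(* Let $d\ge2$ be even, let $\bar K^\infty(t)=\frac{1}{4\pi}(t+1)(\pi-\arccos t)$, and for integers $k\ge0$ define $$c_k^d=V_d\int_{-1}^1\bar K^\infty(t)\,P_{k,d}(t)\,(1-t^2)^{\frac{d-2}{2}}\,dt,\qquad V_d=\frac{\pi^{d/2}}{\Gamma(\frac d2+1)}.$$ With $p=k+\frac{d-2}{2}$, $C_1(d,k)=\frac{\pi^{d/2}}{d/2}\frac{(-1)^k}{2^k}\frac{1}{\Gamma(k+\frac d2)}$ and $C_2(q,d,k)=(-1)^q\binom{p}{q}\frac{(2q)!}{(2q-k)!}$, one has $$c_0^d=\tfrac12C_1(d,0)\Big(\frac{1}{d\,2^{d+1}}\binom{d}{d/2}+\frac{2^{d-1}}{d\binom{d-1}{d/2}}-\frac12\sum_{q=0}^{\frac{d-2}{2}}(-1)^q\binom{\frac{d-2}{2}}{q}\frac{1}{2q+1}\Big),$$ $$c_1^d=\tfrac12C_1(d,1)\sum_{q=1}^{p}C_2(q,d,1)\Big(\frac{1}{2(2q+1)}+\frac{1}{4q}\Big(1-\frac{1}{2^{2q}}\binom{2q}{q}\Big)\Big),$$ for even $k\ge2$: $$c_k^d=\tfrac12C_1(d,k)\sum_{q=\lceil k/2\rceil}^{p}C_2(q,d,k)\Big(\frac{-1}{2(2q-k+1)}+\frac{1}{2(2q-k+2)}\Big(1-\frac{1}{2^{2q-k+2}}\binom{2q-k+2}{\frac{2q-k+2}{2}}\Big)\Big),$$ and for odd $k\ge3$: $$c_k^d=\tfrac12C_1(d,k)\sum_{q=\lceil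 k/2\rceil}^{p}C_2(q,d,k)\,\frac{1}{2(2q-k+1)}\Big(1-\frac{1}{2^{2q-k+1}}\binom{2q-k+1}{\frac{2q-k+1}{2}}\Big).$$
   Context: $P_{k,d}$ is the Gegenbauer polynomial (zonal harmonic of degree $k$ on $\mathbb{S}^d\subset\mathbb{R}^{d+1}$): $P_{k,d}(t)=\frac{(-1)^k}{2^k}\frac{\Gamma(\frac d2)}{\Gamma(k+\frac d2)}\frac{1}{(1-t^2)^{\frac{d-2}{2}}}\frac{d^k}{dt^k}(1-t^2)^{k+\frac{d-2}{2}}$. $\bar K^\infty$ is the limiting Gram kernel of a two-layer ReLU network with bias (bias initialized at $0$, inputs in homogeneous coordinates $\frac{1}{\sqrt2}(\mathbf{x}^T,1)^T$); by the Funk–Hecke theorem $c_k^d$ is (up to the $k$-independent constant $V_d$) the eigenvalue of convolution with $\bar K^\infty$ on spherical harmonics of degree $k$. $\binom{p}{q}=0$ when $q>p$. *)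

theory Defs
  imports "HOL-Analysis.Analysis"
begin

text \<open>Gegenbauer polynomial via the Rodrigues formula; the k-th derivative is
  the iterated library derivative. d is assumed even in the theorem, so the
  exponent (d-2)/2 is the natural number d div 2 - 1.\<close>
definition gegenbauer :: "nat \<Rightarrow> nat \<Rightarrow> real \<Rightarrow> real" where
  "gegenbauer k d t =
     (-1)^k / 2^k * Gamma (real d / 2) / Gamma (real k + real d / 2)
     * (1 / (1 - t^2) ^ (d div 2 - 1))
     * (deriv ^^ k) (\<lambda>s. (1 - s^2) ^ (k + (d div 2 - 1))) t"

definition Kbar :: "real \<Rightarrow> real" where
  "Kbar t = 1 / (4 * pi) * (t + 1) * (pi - arccos t)"

definition Vd :: "nat \<Rightarrow> real" where
  "Vd d = pi powr (real d / 2) / Gamma (real d / 2 + 1)"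

definition ccoef :: "nat \<Rightarrow> nat \<Rightarrow> real" where
  "ccoef k d = Vd d * integral {-1..1}
      (\<lambda>t. Kbar t * gegenbauer k d t * (1 - t^2) ^ (d div 2 - 1))"

definition C1 :: "nat \<Rightarrow> nat \<Rightarrow> real" where
  "C1 d k = pi powr (real d / 2) / (real d / 2) * ((-1)^k / 2^k)
            * (1 / Gamma (real k + real d / 2))"

definition C2 :: "nat \<Rightarrow> nat \<Rightarrow> nat \<Rightarrow> real" where
  "C2 q d k = (-1)^q * real ((k + (d div 2 - 1)) choose q)
              * fact (2*q) / fact (2*q - k)"

end

theory Submission
  imports Defs "HOL-Computational_Algebra.Polynomial"
begin

definition cc :: "nat \<Rightarrow> real" where "cc n = real ((2*n) choose n) / 4^n"

lemma cc_0[simp]: "cc 0 = 1" by (simp add: cc_def)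

lemma cc_fact: "cc n = fact (2*n) / (fact n * fact n * 4^n)"
  unfolding cc_def by (subst binomial_fact) (auto simp: mult_2)

lemma cc_Suc: "cc (Suc n) = cc n * (2*n+1) / (2*n+2)"
proof -
  have f: "(fact (2*Suc n)::real) = (2*real n+2)*(2*n+1)*fact (2*n)"
    by (simp add: algebra_simps)
  have g: "(fact (Suc n)::real) = (real n+1) * fact n" by (simp add: algebra_simps)
  have p: "(4::real)^Suc n = 4 * 4^n" by simp
  define F :: real where "F = fact (2*n)"
  define G :: real where "G = fact n"
  define P :: real where "P = 4^n"
  have nz: "F > 0" "G > 0" "P > 0" by (auto simp: F_def G_def P_def)
  have "cc (Suc n) = (2*real n+2)*(2*n+1)*F / ((real n+1) * G * ((real n+1) * G) * (4 * P))"
    unfolding cc_fact f g p F_def G_def P_def by simp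
  also have "\<dots> = (F * (2*n+1)) / (G * G * P * (2*n+2))"
    using nz by (subst frac_eq_eq) (auto simp: add_pos_pos, simp add: algebra_simps)
  also have "\<dots> = F / (G * G * P) * (2*n+1) / (2*n+2)" by simp
  finally show ?thesis by (simp add: cc_fact F_def G_def P_def)
qed

lemma cc_pos: "cc n > 0" by (simp add: cc_def)

definition W :: "nat \<Rightarrow> real" where
  "W n = (if even n then pi * cc (n div 2) else 0)"

lemma sq_pos: "-1 < (x::real) \<Longrightarrow> x < 1 \<Longrightarrow> 0 < 1 - x^2"
  using abs_square_less_1[of x] by auto

lemma sq_pos': "x \<in> {-1<..<1::real} \<Longrightarrow> 0 < 1 - x^2"
  using sq_pos by auto

lemma W_step:
  "((\<lambda>t::real. real (n+1)*t^n/sqrt(1-t^2) - real (n+2)*t^(n+2)/sqrt(1-t^2)) has_integral 0) {-1..1::real}"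
proof -
  have "((\<lambda>t::real. real (n+1)*t^n/sqrt(1-t^2) - real (n+2)*t^(n+2)/sqrt(1-t^2)) has_integral
     ((\<lambda>t. t^(n+1)* sqrt(1-t^2)) 1 - (\<lambda>t. t^(n+1)* sqrt(1-t^2)) (-1))) {-1..1::real}"
  proof (rule fundamental_theorem_of_calculus_interior)
    show "continuous_on {- 1..1} (\<lambda>t. t ^ (n + 1) * sqrt (1 - t\<^sup>2))"
      by (intro continuous_intros)
  next
    fix x :: real assume x: "x \<in> {-1<..<1}"
    have p: "0 < 1 - x^2" using sq_pos' x .
    have s: "sqrt(1-x^2) > 0" using p by simp
    have ss: "sqrt(1-x^2)^2 = 1 - x^2" using p by simp
    have "((\<lambda>t. t^(n+1)* sqrt(1-t^2)) has_real_derivative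
        (real (n+1) * x^n * sqrt(1-x^2) + x^(n+1) * (inverse (sqrt (1-x^2)) / 2 * (- (2 * x)))) ) (at x)"
    proof -
      have d0: "((\<lambda>t. 1 - t^2) has_real_derivative (- (2*x))) (at x)"
        by (auto intro!: derivative_eq_intros)
      have d1: "((\<lambda>t. sqrt (1 - t^2)) has_real_derivative (inverse (sqrt (1-x^2)) / 2 * (- (2 * x)))) (at x)"
        using DERIV_chain2[OF DERIV_real_sqrt[OF p] d0] .
      have d2: "((\<lambda>t. t^(n+1)) has_real_derivative real (n+1) * x^n) (at x)"
        using DERIV_pow[of "n+1" x] by simp
      show ?thesis by (rule DERIV_cong[OF DERIV_mult[OF d2 d1]]) simp
    qed
    moreover have "real (n+1) * x^n * sqrt(1-x^2) + x^(n+1) * (inverse (sqrt (1-x^2)) / 2 * (- (2 * x)))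
       = real (n+1)*x^n/sqrt(1-x^2) - real (n+2)*x^(n+2)/sqrt(1-x^2)"
    proof -
      have "real (n+1) * x^n * sqrt(1-x^2) = real (n+1) * x^n * (1-x^2) / sqrt(1-x^2)"
        using s ss by (simp add: field_simps power2_eq_square)
      then show ?thesis using s by (simp add: field_simps power2_eq_square)
    qed
    ultimately show "((\<lambda>t. t ^ (n + 1) * sqrt (1 - t\<^sup>2)) has_vector_derivative
           real (n + 1) * x ^ n / sqrt (1 - x\<^sup>2) - real (n + 2) * x ^ (n + 2) / sqrt (1 - x\<^sup>2)) (at x)"
      by (simp add: has_real_derivative_iff_has_vector_derivative[symmetric])
  qed simp
  then show ?thesis by simp
qed

lemma W0: "((\<lambda>t::real. t^0/sqrt(1-t^2)) has_integral W 0) {-1..1}"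
proof -
  have "((\<lambda>t::real. 1/sqrt(1-t^2)) has_integral (arcsin 1 - arcsin (-1))) {-1..1}"
  proof (rule fundamental_theorem_of_calculus_interior)
    show "continuous_on {- 1..1::real} arcsin" by (rule continuous_on_arcsin')
  next
    fix x :: real assume x: "x \<in> {-1<..<1}"
    then show "(arcsin has_vector_derivative 1 / sqrt (1 - x\<^sup>2)) (at x)"
      using DERIV_arcsin[of x] by (simp add: has_real_derivative_iff_has_vector_derivative[symmetric] divide_inverse)
  qed simp
  then show ?thesis by (simp add: W_def)
qed

lemma W1: "((\<lambda>t::real. t^1/sqrt(1-t^2)) has_integral W 1) {-1..1}"
proof -
  have "((\<lambda>t::real. t/sqrt(1-t^2)) has_integral ((\<lambda>t. - sqrt(1-t^2)) 1 - (\<lambda>t. - sqrt(1-t^2)) (-1))) {-1..1}"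
  proof (rule fundamental_theorem_of_calculus_interior)
    show "continuous_on {- 1..1::real} (\<lambda>t. - sqrt(1-t^2))" by (intro continuous_intros)
  next
    fix x :: real assume x: "x \<in> {-1<..<1}"
    have p: "0 < 1 - x^2" using sq_pos' x .
    have d0: "((\<lambda>t. 1 - t^2) has_real_derivative (- (2*x))) (at x)"
      by (auto intro!: derivative_eq_intros)
    have d1: "((\<lambda>t. sqrt (1 - t^2)) has_real_derivative (inverse (sqrt (1-x^2)) / 2 * (- (2 * x)))) (at x)"
      using DERIV_chain2[OF DERIV_real_sqrt[OF p] d0] .
    have "((\<lambda>t. - sqrt (1 - t^2)) has_real_derivative x / sqrt (1-x^2)) (at x)"
      by (rule DERIV_cong[OF DERIV_minus[OF d1]]) (simp add: inverse_eq_divide)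
    then show "((\<lambda>t. - sqrt(1-t^2)) has_vector_derivative x / sqrt (1 - x\<^sup>2)) (at x)"
      by (simp add: has_real_derivative_iff_has_vector_derivative[symmetric])
  qed simp
  then show ?thesis by (simp add: W_def)
qed

lemma W_rec: "W (n+2) = (n+1) / (n+2) * W n"
  by (auto simp: W_def cc_Suc algebra_simps)

lemma W_int: "((\<lambda>t::real. t^n/sqrt(1-t^2)) has_integral W n) {-1..1}"
proof (induction n rule: nat_less_induct)
  case (1 n)
  show ?case
  proof (cases "n < 2")
    case True
    then consider "n = 0" | "n = 1" by linarith
    then show ?thesis using W0 W1 by cases auto
  next
    case False
    then obtain m where m: "n = m + 2" by (metis add.commute le_add_diff_inverse not_less)
    have im: "((\<lambda>t::real. t^m/sqrt(1-t^2)) has_integral W m) {-1..1}" using 1 m by auto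
    have A: "((\<lambda>t::real. (real (m+1) * (t^m/sqrt(1-t^2)) - (real (m+1)*t^m/sqrt(1-t^2) - real (m+2)*t^(m+2)/sqrt(1-t^2))) / real (m+2))
        has_integral (real (m+1) * W m - 0) / real (m+2)) {-1..1}"
      by (intro has_integral_divide has_integral_diff has_integral_mult_right im W_step)
    have B: "(\<lambda>t::real. (real (m+1) * (t^m/sqrt(1-t^2)) - (real (m+1)*t^m/sqrt(1-t^2) - real (m+2)*t^(m+2)/sqrt(1-t^2))) / real (m+2))
        = (\<lambda>t. t^(m+2)/sqrt(1-t^2))"
    proof (rule ext)
      fix t :: real
      have e1: "real (m+1)*t^m/sqrt(1-t^2) = real (m+1)*(t^m/sqrt(1-t^2))" by simp
      have e2: "real (m+2)*t^(m+2)/sqrt(1-t^2) = real (m+2)*(t^(m+2)/sqrt(1-t^2))" by simp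
      show "(real (m+1) * (t^m/sqrt(1-t^2)) - (real (m+1)*t^m/sqrt(1-t^2) - real (m+2)*t^(m+2)/sqrt(1-t^2))) / real (m+2)
        = t^(m+2)/sqrt(1-t^2)" unfolding e1 e2 by simp
    qed
    have C: "(real (m+1) * W m - 0) / real (m+2) = W n" using m W_rec[of m] by (simp add: add.commute)
    show ?thesis using A unfolding B C m .
  qed
qed

definition A :: "nat \<Rightarrow> real" where "A n = (pi - W (n+1)) / (n+1)"

lemma A_int: "((\<lambda>t::real. t^n * (pi - arccos t)) has_integral A n) {-1..1}"
proof -
  let ?f = "\<lambda>t::real. t^(n+1)/real (n+1) * (pi - arccos t)"
  let ?g = "\<lambda>t::real. t^n * (pi - arccos t) + t^(n+1)/real (n+1) * (1/sqrt(1-t^2))"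
  have F: "(?g has_integral (?f 1 - ?f (-1))) {-1..1}"
  proof (rule fundamental_theorem_of_calculus_interior)
    show "continuous_on {- 1..1::real} ?f"
      by (intro continuous_intros continuous_on_arccos') auto
  next
    fix x :: real assume x: "x \<in> {-1<..<1}"
    have d1: "((\<lambda>t. pi - arccos t) has_real_derivative (- inverse (- sqrt (1 - x\<^sup>2)))) (at x)"
      using DERIV_diff[OF DERIV_const DERIV_arccos[of x]] x by simp
    have d2: "((\<lambda>t. t^(n+1)/real (n+1)) has_real_derivative (x^n)) (at x)"
      by (rule DERIV_cong[OF DERIV_cdivide[OF DERIV_pow[of "n+1" x]]]) simp
    have "(?f has_real_derivative ?g x) (at x)"
      by (rule DERIV_cong[OF DERIV_mult[OF d2 d1]]) (simp add: divide_inverse)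
    then show "(?f has_vector_derivative ?g x) (at x)"
      by (simp add: has_real_derivative_iff_has_vector_derivative[symmetric])
  qed simp
  have G: "((\<lambda>t::real. t^(n+1)/sqrt(1-t^2) / real (n+1)) has_integral W (n+1) / real (n+1)) {-1..1}"
    by (intro has_integral_divide W_int)
  have H: "((\<lambda>t. ?g t - t^(n+1)/sqrt(1-t^2) / real (n+1)) has_integral
      ((?f 1 - ?f (-1)) - W (n+1) / real (n+1))) {-1..1}"
    by (intro has_integral_diff F G)
  have e1: "(\<lambda>t. ?g t - t^(n+1)/sqrt(1-t^2) / real (n+1)) = (\<lambda>t. t^n * (pi - arccos t))"
    by (rule ext) simp
  have e2: "(?f 1 - ?f (-1)) - W (n+1) / real (n+1) = A n"
    by (simp add: A_def diff_divide_distrib)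
  show ?thesis using H unfolding e1 e2 .
qed

definition J :: "nat \<Rightarrow> real" where "J m = (A (m+1) + A m) / (4*pi)"

lemma J_int: "((\<lambda>t::real. Kbar t * t^m) has_integral J m) {-1..1}"
proof -
  have "((\<lambda>t::real. (t^(m+1) * (pi - arccos t) + t^m * (pi - arccos t)) / (4*pi)) has_integral J m) {-1..1}"
    unfolding J_def by (intro has_integral_divide has_integral_add A_int)
  moreover have "(\<lambda>t::real. (t^(m+1) * (pi - arccos t) + t^m * (pi - arccos t)) / (4*pi)) = (\<lambda>t. Kbar t * t^m)"
    by (rule ext) (simp add: Kbar_def field_simps)
  ultimately show ?thesis by simp
qed

lemma J_even: assumes "even m" shows "J m = 1/(4*(m+1)) + (1 - cc ((m+2) div 2)) / (4*(m+2))"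
proof -
  have "A (m+1) + A m = pi * (1/(m+1) + (1 - cc ((m+2) div 2)) / (m+2))"
    using assms by (simp add: A_def W_def algebra_simps add_divide_distrib diff_divide_distrib)
  then have "J m = (1/(m+1) + (1 - cc ((m+2) div 2)) / (m+2)) / 4"
    by (simp add: J_def)
  then show ?thesis by (simp add: add_divide_distrib algebra_simps)
qed

lemma J_odd: assumes "odd m" shows "J m = 1/(4*(m+2)) + (1 - cc ((m+1) div 2)) / (4*(m+1))"
proof -
  have "A (m+1) + A m = pi * (1/(m+2) + (1 - cc ((m+1) div 2)) / (m+1))"
    using assms by (simp add: A_def W_def algebra_simps add_divide_distrib diff_divide_distrib)
  then have "J m = (1/(m+2) + (1 - cc ((m+1) div 2)) / (m+1)) / 4"
    by (simp add: J_def)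
  then show ?thesis by (simp add: add_divide_distrib algebra_simps)
qed

definition h :: "nat \<Rightarrow> nat \<Rightarrow> real \<Rightarrow> real" where
  "h k n x = (if k \<le> n then fact n / fact (n-k) * x^(n-k) else 0)"

lemma h0[simp]: "h 0 n x = x^n" by (simp add: h_def)

lemma h_deriv: "((h k n) has_real_derivative h (Suc k) n x) (at x)"
proof (cases "Suc k \<le> n")
  case True
  have ff: "(fact (n-k)::real) = real (n-k) * fact (n - Suc k)"
    using True by (metis Suc_diff_Suc fact_Suc Suc_le_lessD of_nat_fact)
  have dp: "((\<lambda>x. x^(n-k)) has_real_derivative real (n-k) * x^(n-k-1)) (at x)"
    using DERIV_pow[of "n-k" x] by simp
  have "((\<lambda>x. fact n / fact (n-k) * x^(n-k)) has_real_derivative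
        fact n / fact (n-k) * (real (n-k) * x^(n-k-1))) (at x)"
    by (rule DERIV_cmult[OF dp])
  moreover have "fact n / fact (n-k) * (real (n-k) * x^(n-k-1)) = h (Suc k) n x"
    using True by (simp add: h_def ff)
  moreover have "h k n = (\<lambda>x. fact n / fact (n-k) * x^(n-k))"
    using True by (simp add: h_def fun_eq_iff)
  ultimately show ?thesis by simp
next
  case False
  have "h k n = (\<lambda>x. if k \<le> n then fact n / fact (n-k) else 0)"
    using False by (auto simp: h_def fun_eq_iff)
  moreover have "h (Suc k) n x = 0" using False by (simp add: h_def)
  ultimately show ?thesis by simp
qed

lemma deriv_funpow_sum:
  assumes "finite I"
  shows "(deriv ^^ k) (\<lambda>s. \<Sum>i\<in>I. c i * s^(n i)) = (\<lambda>x. \<Sum>i\<in>I. c i * h k (n i) x)"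
proof (induction k)
  case 0 then show ?case by simp
next
  case (Suc k)
  have "deriv (\<lambda>x. \<Sum>i\<in>I. c i * h k (n i) x) = (\<lambda>x. \<Sum>i\<in>I. c i * h (Suc k) (n i) x)"
  proof (rule ext)
    fix x
    have "((\<lambda>x. \<Sum>i\<in>I. c i * h k (n i) x) has_real_derivative (\<Sum>i\<in>I. c i * h (Suc k) (n i) x)) (at x)"
      by (intro DERIV_sum DERIV_cmult h_deriv)
    then show "deriv (\<lambda>x. \<Sum>i\<in>I. c i * h k (n i) x) x = (\<Sum>i\<in>I. c i * h (Suc k) (n i) x)"
      by (rule DERIV_imp_deriv)
  qed
  then show ?case using Suc by simp
qed

lemma sq_expand: "(1 - s^2)^p = (\<Sum>q\<le>p. (-1)^q * real (p choose q) * s^(2*q))" for s :: real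
proof -
  have "(1 - s^2)^p = (- (s^2) + 1)^p" by simp
  also have "\<dots> = (\<Sum>q\<le>p. real (p choose q) * (- (s^2))^q * 1^(p-q))"
    by (rule binomial_ring)
  also have "\<dots> = (\<Sum>q\<le>p. (-1)^q * real (p choose q) * s^(2*q))"
  proof (rule sum.cong)
    fix q assume "q \<in> {..p}"
    have "(- (s^2))^q = (-1)^q * s^(2*q)"
      by (subst power_minus) (simp add: power_mult)
    then show "real (p choose q) * (- (s^2))^q * 1^(p-q) = (-1)^q * real (p choose q) * s^(2*q)"
      by simp
  qed simp
  finally show ?thesis .
qed

definition Dsum :: "nat \<Rightarrow> nat \<Rightarrow> real \<Rightarrow> real" where
  "Dsum k p x = (\<Sum>q\<le>p. (-1)^q * real (p choose q) * h k (2*q) x)"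

lemma deriv_f: "(deriv ^^ k) (\<lambda>s::real. (1 - s^2)^p) = Dsum k p"
  unfolding sq_expand Dsum_def by (rule deriv_funpow_sum) simp

lemma deriv_poly_funpow: "(deriv ^^ k) (poly P) = poly ((pderiv ^^ k) P)" for P :: "real poly"
proof (induction k)
  case (Suc k)
  have "deriv (poly ((pderiv ^^ k) P)) = poly (pderiv ((pderiv ^^ k) P))"
    by (rule ext) (rule DERIV_imp_deriv[OF poly_DERIV])
  then show ?case using Suc by simp
qed simp

lemma dvd_pderiv: "[:-a,1:]^Suc m dvd Q \<Longrightarrow> [:-a,1:]^m dvd pderiv Q" for Q :: "real poly"
proof -
  assume "[:-a,1:]^Suc m dvd Q"
  then obtain g where g: "Q = [:-a,1:]^Suc m * g" by (auto elim: dvdE)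
  have "pderiv Q = pderiv ([:-a,1:]^Suc m) * g + [:-a,1:]^Suc m * pderiv g"
    unfolding g by (simp add: pderiv_mult mult.commute)
  moreover have "[:-a,1:]^m dvd pderiv ([:-a,1:]^Suc m) * g"
    unfolding pderiv_power_Suc by (intro dvd_mult2 dvd_smult dvd_refl)
  moreover have "[:-a,1:]^m dvd [:-a,1:]^Suc m * pderiv g"
    by (intro dvd_mult2 le_imp_power_dvd) simp
  ultimately show ?thesis by simp
qed

lemma dvd_pderiv_funpow: "[:-a,1:]^m dvd Q \<Longrightarrow> j \<le> m \<Longrightarrow> [:-a,1:]^(m-j) dvd (pderiv^^j) Q" for Q :: "real poly"
proof (induction j)
  case (Suc j)
  then have "[:-a,1:]^Suc (m - Suc j) dvd (pderiv^^j) Q" by (simp add: Suc_diff_Suc)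
  then show ?case by (simp add: dvd_pderiv)
qed simp

definition fP :: "nat \<Rightarrow> real poly" where "fP p = [:1,0,-1:]^p"

lemma poly_fP: "poly (fP p) = (\<lambda>s. (1 - s^2)^p)"
  by (simp add: fP_def fun_eq_iff poly_power power2_eq_square)

lemma Dsum_root: assumes "j < p" shows "Dsum j p 1 = 0"
proof -
  have "[:-1,1:] dvd [:1,0,-1::real:]"
    by (rule dvdI[of _ _ "[:-1,-1:]"]) simp
  then have "[:-1,1:]^p dvd fP p" unfolding fP_def by (rule dvd_power_same)
  then have "[:-1,1:]^(p-j) dvd (pderiv^^j) (fP p)" by (rule dvd_pderiv_funpow) (use assms in simp)
  moreover have "[:-1,1::real:] dvd [:-1,1:]^(p-j)" using assms by (simp add: dvd_power)
  ultimately have "[:-1,1::real:] dvd (pderiv^^j) (fP p)" using dvd_trans by blast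
  then have "poly ((pderiv^^j) (fP p)) 1 = 0" by (simp add: poly_eq_0_iff_dvd)
  moreover have "poly ((pderiv^^j) (fP p)) = Dsum j p"
    using deriv_poly_funpow[of j "fP p"] deriv_f[of j p] poly_fP[of p] by simp
  ultimately show ?thesis by simp
qed

definition hc :: "nat \<Rightarrow> nat \<Rightarrow> real" where
  "hc k n = (if k \<le> n then fact n / fact (n-k) else 0)"

lemma h_hc: "h k n x = hc k n * x^(n-k)" by (simp add: h_def hc_def)

definition Isum :: "nat \<Rightarrow> nat \<Rightarrow> real" where
  "Isum k p = (\<Sum>q\<le>p. (-1)^q * real (p choose q) * hc k (2*q) * J (2*q-k))"

lemma I_int: "((\<lambda>t. Kbar t * Dsum k p t) has_integral Isum k p) {-1..1}"
proof -
  have "((\<lambda>t. \<Sum>q\<le>p. (-1)^q * real (p choose q) * hc k (2*q) * (Kbar t * t^(2*q-k))) has_integral Isum k p) {-1..1}"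
    unfolding Isum_def by (intro has_integral_sum has_integral_mult_right J_int) auto
  moreover have "(\<lambda>t. \<Sum>q\<le>p. (-1)^q * real (p choose q) * hc k (2*q) * (Kbar t * t^(2*q-k))) = (\<lambda>t. Kbar t * Dsum k p t)"
    by (rule ext) (simp add: Dsum_def h_hc sum_distrib_left mult_ac)
  ultimately show ?thesis by simp
qed

lemma const_eq:
  assumes "d > 0"
  shows "Vd d * ((-1)^k / 2^k * Gamma (real d / 2) / Gamma (real k + real d / 2)) = C1 d k"
proof -
  have pos: "real d / 2 > 0" using assms by simp
  have ni: "real d / 2 \<notin> \<int>\<^sub>\<le>\<^sub>0" using pos nonpos_Ints_nonpos by fastforce
  have g: "Gamma (real d / 2 + 1) = real d / 2 * Gamma (real d / 2)" using Gamma_plus1[OF ni] .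
  have gp: "Gamma (real d / 2) > 0" using pos by simp
  define a where "a = Gamma (real d / 2)"
  define b where "b = Gamma (real k + real d / 2)"
  define P where "P = pi powr (real d / 2)"
  define D where "D = real d / 2"
  have "a > 0" using gp a_def by simp
  moreover have "D > 0" using pos D_def by simp
  ultimately have "P / (D * a) * ((-1)^k / 2^k * a / b) = P / D * ((-1)^k / 2^k) * (1 / b)"
    by (simp add: field_simps)
  moreover have "Vd d = P / (D * a)" unfolding Vd_def g P_def D_def a_def by simp
  moreover have "C1 d k = P / D * ((-1)^k / 2^k) * (1 / b)" unfolding C1_def P_def D_def b_def by simp
  ultimately show ?thesis unfolding a_def b_def by simp
qed

lemma ccoef_eq:
  assumes "d > 0"
  shows "ccoef k d = C1 d k * Isum k (k + (d div 2 - 1))"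
proof -
  define p where "p = k + (d div 2 - 1)"
  define G0 where "G0 = (-1)^k / 2^k * Gamma (real d / 2) / Gamma (real k + real d / 2)"
  have "integral {-1..1} (\<lambda>t. Kbar t * gegenbauer k d t * (1 - t^2) ^ (d div 2 - 1))
      = integral {-1..1} (\<lambda>t. G0 * (Kbar t * Dsum k p t))"
  proof (rule integral_spike[of "{-1,1}"])
    fix t :: real assume t: "t \<in> {-1..1} - {-1,1}"
    then have "0 < 1 - t^2" using sq_pos by auto
    then have nz: "(1 - t^2) ^ (d div 2 - 1) \<noteq> 0" by simp
    show "G0 * (Kbar t * Dsum k p t) = Kbar t * gegenbauer k d t * (1 - t^2) ^ (d div 2 - 1)"
    proof -
      have "gegenbauer k d t = G0 * (1 / (1 - t^2) ^ (d div 2 - 1)) * Dsum k p t"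
        unfolding gegenbauer_def deriv_f G0_def p_def by simp
      then show ?thesis using nz by simp
    qed
  qed simp
  also have "\<dots> = G0 * Isum k p" using I_int[of k p] by (simp add: integral_unique)
  finally have "ccoef k d = Vd d * (G0 * Isum k p)" unfolding ccoef_def by simp
  also have "\<dots> = (Vd d * G0) * Isum k p" by (simp add: mult.assoc)
  also have "\<dots> = C1 d k * Isum k p" using const_eq[OF assms, of k] unfolding G0_def by simp
  finally show ?thesis unfolding p_def .
qed

lemma alt_pascal:
  "(\<Sum>j\<le>Suc n. (-1)^j * real (Suc n choose j) * a j) =
   (\<Sum>j\<le>n. (-1)^j * real (n choose j) * (a j - a (Suc j)))"
proof -
  have L: "(\<Sum>j\<le>Suc n. (-1)^j * real (Suc n choose j) * a j) =
     a 0 + (\<Sum>j\<le>n. (-1)^Suc j * real (n choose j) * a (Suc j))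
         + (\<Sum>j\<le>n. (-1)^Suc j * real (n choose Suc j) * a (Suc j))"
    by (subst sum.atMost_Suc_shift) (simp add: sum.distrib[symmetric] algebra_simps)
  have R1: "(\<Sum>j\<le>n. (-1)^j * real (n choose j) * a j) =
      a 0 + (\<Sum>j\<le>n. (-1)^Suc j * real (n choose Suc j) * a (Suc j))"
  proof -
    have "(\<Sum>j\<le>n. (-1)^j * real (n choose j) * a j) = (\<Sum>j\<le>Suc n. (-1)^j * real (n choose j) * a j)"
      by simp
    also have "\<dots> = a 0 + (\<Sum>j\<le>n. (-1)^Suc j * real (n choose Suc j) * a (Suc j))"
      by (subst sum.atMost_Suc_shift) simp
    finally show ?thesis .
  qed
  show ?thesis unfolding L
    by (simp add: R1 sum_subtractf right_diff_distrib sum_negf)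
qed

lemma Id1: "x > 0 \<Longrightarrow> (\<Sum>q\<le>n. (-1)^q * real (n choose q) / (x + q)) = fact n / pochhammer x (Suc n)"
proof (induction n arbitrary: x)
  case 0 then show ?case by (simp add: pochhammer_Suc)
next
  case (Suc n)
  have pos: "x + 1 > 0" using Suc.prems by simp
  have "(\<Sum>q\<le>Suc n. (-1)^q * real (Suc n choose q) / (x + q)) =
        (\<Sum>q\<le>n. (-1)^q * real (n choose q) * (1/(x+q) - 1/(x + Suc q)))"
    using alt_pascal[of n "\<lambda>q. 1/(x+q)"] by simp
  also have "\<dots> = (\<Sum>q\<le>n. (-1)^q * real (n choose q) / (x+q)) - (\<Sum>q\<le>n. (-1)^q * real (n choose q) / ((x+1) + q))"
    by (simp add: sum_subtractf right_diff_distrib add_ac)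
  also have "\<dots> = fact n / pochhammer x (Suc n) - fact n / pochhammer (x+1) (Suc n)"
    using Suc.IH[OF Suc.prems] Suc.IH[OF pos] by simp
  also have "\<dots> = fact (Suc n) / pochhammer x (Suc (Suc n))"
  proof -
    have p1: "pochhammer x (Suc (Suc n)) = pochhammer x (Suc n) * (x + Suc n)"
      by (simp add: pochhammer_Suc)
    have p2: "pochhammer x (Suc (Suc n)) = x * pochhammer (x+1) (Suc n)"
      by (rule pochhammer_rec)
    have a: "pochhammer x (Suc n) > 0" using Suc.prems by (intro pochhammer_pos) simp
    have b: "pochhammer (x+1) (Suc n) > 0" using pos by (intro pochhammer_pos) simp
    have "fact n / pochhammer x (Suc n) = fact n * (x + Suc n) / pochhammer x (Suc (Suc n))"
      using a Suc.prems unfolding p1 by simp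
    moreover have "fact n / pochhammer (x+1) (Suc n) = fact n * x / pochhammer x (Suc (Suc n))"
      using b Suc.prems unfolding p2 by simp
    ultimately show ?thesis by (simp add: diff_divide_distrib[symmetric] algebra_simps)
  qed
  finally show ?case .
qed

lemma Id2: "pochhammer (1/2::real) n = cc n * fact n"
proof (induction n)
  case (Suc n)
  show ?case by (simp add: pochhammer_Suc Suc cc_Suc field_simps)
qed simp

lemma aux3:
  fixes F cr cn fr fn n r :: real
  assumes "F > 0" "n \<ge> 0" "r \<ge> 0"
  shows "cr * cn * fr * fn / F - cr*(2*r+1)/(2*r+2) * cn * ((r+1)*fr) * fn / ((n+r+1)*F)
     = cr * (cn*(2*n+1)/(2*n+2)) * fr * ((n+1)*fn) / ((n+r+1)*F)"
proof -
  have a: "r+1 \<noteq> 0" "n+1 \<noteq> 0" "n+r+1 \<noteq> 0" "F \<noteq> 0" using assms by auto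
  have q1: "(2*r+1)/(2*r+2) * (r+1) = (2*r+1)/2" using a
    by (simp add: field_simps)
  have q2: "(2*n+1)/(2*n+2) * (n+1) = (2*n+1)/2" using a
    by (simp add: field_simps)
  have e1: "cr*(2*r+1)/(2*r+2) * cn * ((r+1)*fr) * fn / ((n+r+1)*F) = (cr * cn * fr * fn / F) * (((2*r+1)/(2*r+2) * (r+1))/(n+r+1))"
    by (simp add: ac_simps)
  have e2: "cr * (cn*(2*n+1)/(2*n+2)) * fr * ((n+1)*fn) / ((n+r+1)*F) = (cr * cn * fr * fn / F) * (((2*n+1)/(2*n+2) * (n+1))/(n+r+1))"
    by (simp add: ac_simps)
  have e3: "1 - (2*r+1)/2/(n+r+1) = (2*n+1)/2/(n+r+1)"
    using a by (simp add: field_simps)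
  show ?thesis unfolding e1 e2 q1 q2 e3[symmetric] by (simp add: algebra_simps)
qed

lemma Id3: "(\<Sum>j\<le>n. (-1)^j * real (n choose j) * cc (j + r)) = cc r * cc n * fact r * fact n / fact (n + r)"
proof (induction n arbitrary: r)
  case 0 then show ?case by simp
next
  case (Suc n)
  have "(\<Sum>j\<le>Suc n. (-1)^j * real (Suc n choose j) * cc (j + r)) =
      (\<Sum>j\<le>n. (-1)^j * real (n choose j) * (cc (j + r) - cc (Suc j + r)))"
    by (rule alt_pascal)
  also have "\<dots> = (\<Sum>j\<le>n. (-1)^j * real (n choose j) * cc (j + r)) - (\<Sum>j\<le>n. (-1)^j * real (n choose j) * cc (j + Suc r))"
    by (simp add: sum_subtractf right_diff_distrib)
  also have "\<dots> = cc r * cc n * fact r * fact n / fact (n + r) - cc (Suc r) * cc n * fact (Suc r) * fact n / fact (n + Suc r)"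
    using Suc.IH[of r] Suc.IH[of "Suc r"] by simp
  also have "\<dots> = cc r * cc (Suc n) * fact r * fact (Suc n) / fact (Suc n + r)"
  proof -
    have f: "(fact (n + Suc r) :: real) = (real n + real r + 1) * fact (n + r)" by (simp add: algebra_simps)
    have f2: "(fact (Suc n + r) :: real) = (real n + real r + 1) * fact (n + r)" by (simp add: algebra_simps)
    have pf: "(fact (n + r)::real) > 0" by simp
    have f3: "(fact (Suc r)::real) = (real r + 1) * fact r" by (simp add: algebra_simps)
    have f4: "(fact (Suc n)::real) = (real n + 1) * fact n" by (simp add: algebra_simps)
    show ?thesis unfolding f f2 f3 f4 cc_Suc using aux3[OF pf, of "real n" "real r" "cc r" "cc n" "fact r" "fact n"]
      by (simp add: add_ac)
  qed
  finally show ?case .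
qed

lemma S_val: "(\<Sum>q\<le>e. (-1)^q * real (e choose q) / (2*real q + 1)) = 1 / (2*(real e+1)*cc (Suc e))"
proof -
  have "(\<Sum>q\<le>e. (-1)^q * real (e choose q) / (2*real q + 1)) = (\<Sum>q\<le>e. (-1)^q * real (e choose q) / (1/2 + real q)) / 2"
  proof -
    have "(\<Sum>q\<le>e. (-1)^q * real (e choose q) / (1/2 + real q)) / 2 = (\<Sum>q\<le>e. (-1)^q * real (e choose q) / (1/2 + real q) / 2)"
      by (simp add: sum_divide_distrib)
    also have "\<dots> = (\<Sum>q\<le>e. (-1)^q * real (e choose q) / (2*real q + 1))"
    proof (rule sum.cong)
      fix q
      have "(1/2 + real q) * 2 = 2 * real q + 1" by simp
      then show "(-1)^q * real (e choose q) / (1/2 + real q) / 2 = (-1)^q * real (e choose q) / (2*real q + 1)"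
        by (simp only: divide_divide_eq_left)
    qed simp
    finally show ?thesis by simp
  qed
  also have "\<dots> = fact e / pochhammer (1/2) (Suc e) / 2" using Id1[of "1/2" e] by simp
  also have "\<dots> = 1 / (2*(real e+1)*cc (Suc e))"
  proof -
    have f: "(fact (Suc e)::real) = (real e + 1) * fact e" by (simp add: algebra_simps)
    have "cc (Suc e) * ((real e + 1) * fact e) = fact e * (cc (Suc e) * (real e + 1))" by simp
    then have "fact e / (cc (Suc e) * fact (Suc e)) = 1 / (cc (Suc e) * (real e + 1))"
      unfolding f by simp
    then show ?thesis unfolding Id2 by (simp add: mult_ac)
  qed
  finally show ?thesis .
qed

lemma Y_val: "2^(2*e+1) / ((2*real e + 2) * real ((2*e+1) choose (e+1))) = 1 / (2*(real e+1)*cc (Suc e))"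
proof -
  have bin: "(2*e+2) choose (e+1) = 2 * ((2*e+1) choose (e+1))"
  proof -
    have "(2*e+2) choose (e+1) = ((2*e+1) choose e) + ((2*e+1) choose (e+1))"
      using binomial_Suc_Suc[of "2*e+1" e] by simp
    moreover have "(2*e+1) choose e = (2*e+1) choose (e+1)"
      using binomial_symmetric[of e "2*e+1"] by simp
    ultimately show ?thesis by simp
  qed
  define B where "B = real ((2*e+1) choose (e+1))"
  define P :: real where "P = 2^(2*e+1)"
  have Bp: "B > 0" unfolding B_def by (simp del: binomial_Suc_Suc)
  have Pp: "P > 0" unfolding P_def by simp
  have "2 * Suc e = 2*e+2" by simp
  then have "cc (Suc e) = 2 * B / 4^(e+1)"
    unfolding cc_def B_def using bin by (simp only: of_nat_mult) simp
  moreover have "(4::real)^(e+1) = 2 * P"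
    unfolding P_def by (simp add: power_mult power_add)
  ultimately have c: "cc (Suc e) = B / P" using Pp by simp
  show ?thesis unfolding c B_def[symmetric] P_def[symmetric] using Bp Pp
    by (simp add: field_simps)
qed

lemma alt_zero_minus_cc: "n > 0 \<Longrightarrow> (\<Sum>j\<le>n. (-1)^j * real (n choose j) * (1 - cc j)) = - cc n"
proof -
  assume n: "n > 0"
  have "(\<Sum>j\<le>n. (-1)^j * real (n choose j) * (1 - cc j)) =
        (\<Sum>j\<le>n. (-1)^j * real (n choose j)) - (\<Sum>j\<le>n. (-1)^j * real (n choose j) * cc (j + 0))"
    by (simp add: sum_subtractf right_diff_distrib)
  also have "\<dots> = 0 - cc n" using choose_alternating_sum[OF n, where 'a=real] Id3[of n 0] by simp
  finally show ?thesis by simp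
qed

lemma Id4: "(\<Sum>q\<le>e. (-1)^q * real (e choose q) * (1 - cc (Suc q)) / (2*real q + 2)) = cc (Suc e) / (2*(real e + 1))"
proof -
  have t: "(-1)^q * real (e choose q) * (1 - cc (Suc q)) / (2*real q + 2)
      = - ((-1)^Suc q * real (Suc e choose Suc q) * (1 - cc (Suc q))) / (2*(real e + 1))" for q
  proof -
    have "real (Suc e) * real (e choose q) = real (Suc e choose Suc q) * real (Suc q)"
      using Suc_times_binomial_eq[of e q] by (metis of_nat_mult)
    then have "real (e choose q) / (2*real q + 2) = real (Suc e choose Suc q) / (2*(real e + 1))"
      by (simp add: field_simps)
    then have "(-1)^q * real (e choose q) * (1 - cc (Suc q)) / (2*real q + 2)
        = ((-1)^q * (1 - cc (Suc q))) * (real (Suc e choose Suc q) / (2*(real e + 1)))"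
      by (metis (no_types, lifting) mult.commute mult.left_commute times_divide_eq_right)
    then show ?thesis by simp
  qed
  have "(\<Sum>q\<le>e. (-1)^q * real (e choose q) * (1 - cc (Suc q)) / (2*real q + 2))
     = - (\<Sum>q\<le>e. (-1)^Suc q * real (Suc e choose Suc q) * (1 - cc (Suc q))) / (2*(real e + 1))"
    unfolding t by (simp add: sum_divide_distrib sum_negf)
  moreover have "(\<Sum>q\<le>e. (-1)^Suc q * real (Suc e choose Suc q) * (1 - cc (Suc q)))
      = (\<Sum>j\<le>Suc e. (-1)^j * real (Suc e choose j) * (1 - cc j))"
    by (subst sum.atMost_Suc_shift) simp
  moreover have "(\<Sum>j\<le>Suc e. (-1)^j * real (Suc e choose j) * (1 - cc j)) = - cc (Suc e)"
    by (rule alt_zero_minus_cc) simp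
  ultimately show ?thesis by simp
qed

definition C2v :: "nat \<Rightarrow> nat \<Rightarrow> nat \<Rightarrow> real" where
  "C2v p k q = (-1)^q * real (p choose q) * fact (2*q) / fact (2*q - k)"

lemma set_ceil: "{nat \<lceil>real k / 2\<rceil>..p} = {q \<in> {..p}. k \<le> 2*q}"
proof -
  have iff: "nat \<lceil>real k / 2\<rceil> \<le> q \<longleftrightarrow> k \<le> 2*q" for q
  proof -
    have "nat \<lceil>real k / 2\<rceil> \<le> q \<longleftrightarrow> \<lceil>real k / 2\<rceil> \<le> int q" by (simp add: nat_le_iff)
    also have "\<dots> \<longleftrightarrow> real k / 2 \<le> real q" by (simp add: ceiling_le_iff)
    also have "\<dots> \<longleftrightarrow> k \<le> 2*q" by linarith
    finally show ?thesis .
  qed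
  show ?thesis
  proof (rule set_eqI)
    fix q show "q \<in> {nat \<lceil>real k / 2\<rceil>..p} \<longleftrightarrow> q \<in> {q \<in> {..p}. k \<le> 2*q}"
      using iff[of q] by auto
  qed
qed

lemma sum_ceil: "(\<Sum>q = nat \<lceil>real k / 2\<rceil>..p. f q) = (\<Sum>q\<le>p. if k \<le> 2*q then f q else 0)"
proof -
  have e: "{nat \<lceil>real k / 2\<rceil>..p} = {..p} \<inter> {q. k \<le> 2*q}" unfolding set_ceil by blast
  show ?thesis unfolding e sum.inter_restrict[OF finite_atMost] by simp
qed

lemma sum_one: "(\<Sum>q = 1..p. f q) = (\<Sum>q\<le>p. if 1 \<le> 2*(q::nat) then f q else 0)"
proof -
  have e: "{1..p} = {..p} \<inter> {q. 1 \<le> 2*q}" by auto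
  show ?thesis unfolding e sum.inter_restrict[OF finite_atMost] by simp
qed

lemma binom_cc: "even N \<Longrightarrow> 1 / 2^N * real (N choose (N div 2)) = cc (N div 2)"
proof -
  assume "even N"
  then obtain j where N: "N = 2*j" by auto
  have "(2::real)^(2*j) = 4^j" by (simp add: power_mult)
  then show ?thesis unfolding N cc_def by simp
qed

lemma Isum_alt: "Isum k p = (\<Sum>q\<le>p. if k \<le> 2*q then C2v p k q * J (2*q-k) else 0)"
  unfolding Isum_def C2v_def hc_def by (rule sum.cong) auto

lemma Dsum_1: "Dsum j p 1 = (\<Sum>q\<le>p. (-1)^q * real (p choose q) * hc j (2*q))"
  unfolding Dsum_def h_hc by simp

lemma alg_even:
  fixes y z c K J' E :: real
  assumes "J' = 1/(4*y) + (1-c)/(4*z)" "E = -1/(2*y) + 1/(2*z)*(1-c)" "y \<noteq> 0" "z \<noteq> 0"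
  shows "K * J' = 1/2*(K*E) + 1/2*(K/y)"
proof -
  have "J' = 1/2*E + 1/(2*y)" unfolding assms(1,2) using assms(3,4) by (simp add: field_simps)
  then show ?thesis by (simp add: algebra_simps)
qed

lemma alg_odd:
  fixes y z c K J' E :: real
  assumes "J' = 1/(4*z) + (1-c)/(4*y)" "E = 1/(2*y)*(1-c)" "y \<noteq> 0" "z \<noteq> 0" "z = y + 1"
  shows "K * J' = 1/2*(K*E) + 1/4*(K/y - K/(y*z))"
proof -
  have a0: "1/y - 1/(y*z) = (z-1)/(y*z)" using assms(3,4) by (simp add: field_simps)
  have a: "1/y - 1/(y*z) = 1/z" unfolding a0 using assms(3,4,5) by simp
  have "J' = 1/2*E + 1/4*(1/z)" unfolding assms(1,2) using assms(3,4) by (simp add: field_simps)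
  then have "K * J' = 1/2*(K*E) + 1/4*(K * (1/y - 1/(y*z)))" unfolding a by (simp add: algebra_simps)
  then show ?thesis by (simp add: algebra_simps)
qed

lemma fact_m1: "(fact (m+1)::real) = (real m + 1) * fact m"
  by (simp add: algebra_simps)

lemma case_even:
  assumes "even k" "k \<ge> 2" "k \<le> p"
  shows "Isum k p = 1/2 * (\<Sum>q\<le>p. if k \<le> 2*q then C2v p k q *
         (-1 / (2 * (2*real q - real k + 1))
          + 1 / (2 * (2*real q - real k + 2))
            * (1 - 1 / 2^(2*q-k+2) * real ((2*q-k+2) choose ((2*q-k+2) div 2)))) else 0)"
proof -
  define Ee where "Ee q = (-1 / (2 * (2*real q - real k + 1))
          + 1 / (2 * (2*real q - real k + 2))
            * (1 - 1 / 2^(2*q-k+2) * real ((2*q-k+2) choose ((2*q-k+2) div 2))))" for q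
  have tm: "(if k \<le> 2*q then C2v p k q * J (2*q-k) else 0) =
      1/2 * (if k \<le> 2*q then C2v p k q * Ee q else 0) + 1/2 * ((-1)^q * real (p choose q) * hc (k-1) (2*q))" for q
  proof (cases "k \<le> 2*q")
    case True
    define m where "m = 2*q - k"
    have em: "even m" using assms(1) True unfolding m_def by auto
    have r: "2*real q - real k = real m" using True by (simp add: m_def of_nat_diff)
    have nn: "2*q-k+2 = m+2" by (simp add: m_def)
    have Jm: "J m = 1/(4*(real m+1)) + (1 - cc ((m+2) div 2))/(4*(real m+2))"
      using J_even[OF em] by simp
    have bc: "1 / 2^(m+2) * real ((m+2) choose ((m+2) div 2)) = cc ((m+2) div 2)"
      using binom_cc[of "m+2"] em by simp
    have E: "Ee q = -1/(2*(real m+1)) + 1/(2*(real m+2))*(1 - cc ((m+2) div 2))"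
      unfolding Ee_def r nn bc by simp
    have km: "2*q - (k-1) = m+1" using True assms(2) by (simp add: m_def)
    have hck: "hc (k-1) (2*q) = fact (2*q) / fact (m+1)"
      unfolding hc_def km using True by simp
    have Km: "(-1)^q * real (p choose q) * hc (k-1) (2*q) = C2v p k q / (real m + 1)"
      unfolding hck C2v_def fact_m1 m_def[symmetric] by simp
    have "C2v p k q * J m = 1/2*(C2v p k q * Ee q) + 1/2*(C2v p k q/(real m + 1))"
      by (rule alg_even[OF Jm E]) auto
    then show ?thesis using True unfolding Km m_def by simp
  next
    case False
    then have "\<not> k - 1 \<le> 2*q" using assms(1,2) by presburger
    then show ?thesis using False by (simp add: hc_def)
  qed
  have "Isum k p = (\<Sum>q\<le>p. 1/2 * (if k \<le> 2*q then C2v p k q * Ee q else 0) + 1/2 * ((-1)^q * real (p choose q) * hc (k-1) (2*q)))"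
    unfolding Isum_alt tm ..
  also have "\<dots> = 1/2 * (\<Sum>q\<le>p. if k \<le> 2*q then C2v p k q * Ee q else 0) + 1/2 * Dsum (k-1) p 1"
    unfolding Dsum_1 by (simp add: sum.distrib sum_distrib_left)
  also have "Dsum (k-1) p 1 = 0" using assms by (intro Dsum_root) simp
  finally show ?thesis unfolding Ee_def by simp
qed

lemma case_odd:
  assumes "odd k" "k \<ge> 3" "k \<le> p"
  shows "Isum k p = 1/2 * (\<Sum>q\<le>p. if k \<le> 2*q then C2v p k q *
         (1 / (2 * (2*real q - real k + 1))
            * (1 - 1 / 2^(2*q-k+1) * real ((2*q-k+1) choose ((2*q-k+1) div 2)))) else 0)"
proof -
  define Eo where "Eo q = (1 / (2 * (2*real q - real k + 1))
            * (1 - 1 / 2^(2*q-k+1) * real ((2*q-k+1) choose ((2*q-k+1) div 2))))" for q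
  have tm: "(if k \<le> 2*q then C2v p k q * J (2*q-k) else 0) =
      1/2 * (if k \<le> 2*q then C2v p k q * Eo q else 0)
      + 1/4 * ((-1)^q * real (p choose q) * hc (k-1) (2*q) - (-1)^q * real (p choose q) * hc (k-2) (2*q))" for q
  proof (cases "k \<le> 2*q")
    case True
    define m where "m = 2*q - k"
    have om: "odd m" using assms(1) True unfolding m_def by auto
    have r: "2*real q - real k = real m" using True by (simp add: m_def of_nat_diff)
    have nn: "2*q-k+1 = m+1" by (simp add: m_def)
    have Jm: "J m = 1/(4*(real m+2)) + (1 - cc ((m+1) div 2))/(4*(real m+1))"
      using J_odd[OF om] by simp
    have bc: "1 / 2^(m+1) * real ((m+1) choose ((m+1) div 2)) = cc ((m+1) div 2)"
      using binom_cc[of "m+1"] om by simp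
    have E: "Eo q = 1/(2*(real m+1))*(1 - cc ((m+1) div 2))"
      unfolding Eo_def r nn bc by simp
    have km1: "2*q - (k-1) = m+1" using True assms(2) by (simp add: m_def)
    have km2: "2*q - (k-2) = m+2" using True assms(2) by (simp add: m_def)
    have hck1: "hc (k-1) (2*q) = fact (2*q) / fact (m+1)"
      unfolding hc_def km1 using True by simp
    have hck2: "hc (k-2) (2*q) = fact (2*q) / fact (m+2)"
      unfolding hc_def km2 using True by simp
    have f2: "(fact (m+2)::real) = (real m + 1) * (real m + 2) * fact m"
      by (simp add: algebra_simps)
    have Km: "(-1)^q * real (p choose q) * hc (k-1) (2*q) - (-1)^q * real (p choose q) * hc (k-2) (2*q)
        = C2v p k q / (real m + 1) - C2v p k q / ((real m + 1) * (real m + 2))"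
      unfolding hck1 hck2 C2v_def fact_m1 f2 m_def[symmetric] by (simp add: mult_ac)
    have "C2v p k q * J m = 1/2*(C2v p k q * Eo q) + 1/4*(C2v p k q/(real m + 1) - C2v p k q / ((real m + 1) * (real m + 2)))"
      by (rule alg_odd[OF Jm E]) auto
    then show ?thesis using True unfolding Km m_def by simp
  next
    case False
    show ?thesis
    proof (cases "2*q = k - 1")
      case True
      have a: "2*q - (k-1) = 0" "2*q - (k-2) = 1" using True assms(2) by auto
      have "hc (k-1) (2*q) = hc (k-2) (2*q)" unfolding hc_def a using True by simp
      then show ?thesis using False by simp
    next
      case False2: False
      then have "\<not> k - 1 \<le> 2*q" "\<not> k - 2 \<le> 2*q" using False assms(1,2) by presburger+
      then show ?thesis using False by (simp add: hc_def)
    qed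
  qed
  have "Isum k p = (\<Sum>q\<le>p. 1/2 * (if k \<le> 2*q then C2v p k q * Eo q else 0)
      + 1/4 * ((-1)^q * real (p choose q) * hc (k-1) (2*q) - (-1)^q * real (p choose q) * hc (k-2) (2*q)))"
    unfolding Isum_alt tm ..
  also have "\<dots> = 1/2 * (\<Sum>q\<le>p. if k \<le> 2*q then C2v p k q * Eo q else 0) + 1/4 * (Dsum (k-1) p 1 - Dsum (k-2) p 1)"
    unfolding Dsum_1 by (simp only: sum.distrib sum_distrib_left[symmetric] sum_subtractf)
  also have "Dsum (k-1) p 1 = 0" using assms by (intro Dsum_root) simp
  also have "Dsum (k-2) p 1 = 0" using assms by (intro Dsum_root) simp
  finally show ?thesis unfolding Eo_def by simp
qed

lemma alg_one:
  fixes a b c :: real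
  assumes "a \<noteq> 0" "b \<noteq> 0"
  shows "1/(4*a) + (1-c)/(4*(2*b)) = 1/2*(1/(2*a) + 1/(4*b)*(1-c))"
  using assms by (simp add: field_simps)

lemma alg_zero:
  fixes a b c s :: real
  shows "s * (1/(4*a) + (1-c)/(4*b)) = 1/4*(s/a) + 1/4*(s*(1-c)/b)"
  by (simp add: algebra_simps)

lemma case_one:
  shows "Isum 1 p = 1/2 * (\<Sum>q = 1..p. C2v p 1 q *
         (1 / (2 * (2*real q + 1))
          + 1 / (4 * real q) * (1 - 1 / 2^(2*q) * real ((2*q) choose q))))"
proof -
  have tm: "(if 1 \<le> 2*q then C2v p 1 q * J (2*q-1) else 0) =
     1/2 * (if 1 \<le> 2*q then C2v p 1 q * (1 / (2 * (2*real q + 1))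
          + 1 / (4 * real q) * (1 - 1 / 2^(2*q) * real ((2*q) choose q))) else 0)" for q
  proof (cases "1 \<le> 2*q")
    case True
    then have q: "q \<ge> 1" by simp
    have om: "odd (2*q-1)" using q by simp
    have a: "real (2*q-1) + 2 = 2*real q + 1" "real (2*q-1) + 1 = 2*real q" "(2*q-1+1) div 2 = q"
      using q by (auto simp: of_nat_diff)
    have Jm: "J (2*q-1) = 1/(4*(2*real q + 1)) + (1 - cc q)/(4*(2*real q))"
      using J_odd[OF om] unfolding a by simp
    have bc: "1 / 2^(2*q) * real ((2*q) choose q) = cc q"
      using binom_cc[of "2*q"] by simp
    have qp: "real q > 0" using q by simp
    have "J (2*q-1) = 1/2 * (1 / (2 * (2*real q + 1)) + 1 / (4 * real q) * (1 - cc q))"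
      unfolding Jm by (rule alg_one) (use qp in auto)
    then show ?thesis using True unfolding bc by simp
  qed simp
  show ?thesis unfolding Isum_alt sum_one tm by (simp add: sum_distrib_left)
qed

lemma case_zero:
  "Isum 0 e = 1/4 * (\<Sum>q\<le>e. (-1)^q * real (e choose q) / (2*real q + 1))
            + 1/4 * (\<Sum>q\<le>e. (-1)^q * real (e choose q) * (1 - cc (Suc q)) / (2*real q + 2))"
proof -
  have tm: "(-1)^q * real (e choose q) * hc 0 (2*q) * J (2*q - 0) =
     1/4 * ((-1)^q * real (e choose q) / (2*real q + 1))
     + 1/4 * ((-1)^q * real (e choose q) * (1 - cc (Suc q)) / (2*real q + 2))" for q
  proof -
    have em: "even (2*q)" by simp
    have Jm: "J (2*q) = 1/(4*(2*real q + 1)) + (1 - cc (Suc q))/(4*(2*real q + 2))"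
      using J_even[OF em] by simp
    have h: "hc 0 (2*q) = 1" by (simp add: hc_def)
    show ?thesis unfolding diff_zero Jm h mult_1_right by (rule alg_zero)
  qed
  show ?thesis unfolding Isum_def tm by (simp add: sum.distrib sum_distrib_left)
qed

lemma alg_k0:
  fixes a c :: real
  assumes "a \<noteq> 0" "c \<noteq> 0"
  shows "1/4*(1/(2*a*c)) + 1/4*(c/(2*a)) = 1/2*(c/(4*a) + 1/(2*a*c) - 1/2*(1/(2*a*c)))"
  using assms by (simp add: field_simps)

theorem mainTheorem7:
  fixes d :: nat
  assumes "d \<ge> 2" and "even d"
  shows
   "ccoef 0 d = 1/2 * C1 d 0 *
      (1 / (real d * 2^(d+1)) * real (d choose (d div 2))
       + 2^(d-1) / (real d * real ((d-1) choose (d div 2)))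
       - 1/2 * (\<Sum>q=0..(d-2) div 2. (-1)^q * real (((d-2) div 2) choose q) / (2*real q + 1))) \<and>
   ccoef 1 d = 1/2 * C1 d 1 *
      (\<Sum>q=1..1 + (d-2) div 2. C2 q d 1 *
         (1 / (2 * (2*real q + 1))
          + 1 / (4 * real q) * (1 - 1 / 2^(2*q) * real ((2*q) choose q)))) \<and>
   (\<forall>k::nat. k \<ge> 2 \<longrightarrow> even k \<longrightarrow>
      ccoef k d = 1/2 * C1 d k *
      (\<Sum>q = nat \<lceil>real k / 2\<rceil>..k + (d-2) div 2. C2 q d k *
         (-1 / (2 * (2*real q - real k + 1))
          + 1 / (2 * (2*real q - real k + 2))
            * (1 - 1 / 2^(2*q-k+2) * real ((2*q-k+2) choose ((2*q-k+2) div 2)))))) \<and>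
   (\<forall>k::nat. k \<ge> 3 \<longrightarrow> odd k \<longrightarrow>
      ccoef k d = 1/2 * C1 d k *
      (\<Sum>q = nat \<lceil>real k / 2\<rceil>..k + (d-2) div 2. C2 q d k *
         (1 / (2 * (2*real q - real k + 1))
            * (1 - 1 / 2^(2*q-k+1) * real ((2*q-k+1) choose ((2*q-k+1) div 2))))))"
proof -
  obtain m where m: "d = 2*m" using assms(2) by (rule evenE)
  define e where "e = m - 1"
  have d: "d = 2*e+2" using m assms(1) unfolding e_def by simp
  have dd: "d div 2 - 1 = e" "(d-2) div 2 = e" "d - 1 = 2*e+1" "d div 2 = e+1" by (auto simp: d)
  have rd: "real d = 2*real e + 2" by (simp add: d)
  have dpos: "d > 0" using assms by simp
  have C2e: "C2 q d k = C2v (k + e) k q" for q k by (simp add: C2_def C2v_def dd)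
  have P0: "ccoef 0 d = 1/2 * C1 d 0 *
      (1 / (real d * 2^(d+1)) * real (d choose (d div 2))
       + 2^(d-1) / (real d * real ((d-1) choose (d div 2)))
       - 1/2 * (\<Sum>q=0..(d-2) div 2. (-1)^q * real (((d-2) div 2) choose q) / (2*real q + 1)))"
  proof -
    define c where "c = cc (Suc e)"
    define S where "S = (\<Sum>q\<le>e. (-1)^q * real (e choose q) / (2*real q + 1))"
    have cp: "c > 0" unfolding c_def by (rule cc_pos)
    have S: "S = 1 / (2*(real e+1)*c)" unfolding S_def c_def by (rule S_val)
    have I0: "Isum 0 e = 1/4 * S + 1/4 * (c / (2*(real e + 1)))"
      unfolding case_zero Id4 S_def c_def ..
    have bd: "1 / 2^d * real (d choose (d div 2)) = c"
      using binom_cc[of d] assms(2) unfolding c_def dd by simp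
    have X: "1 / (real d * 2^(d+1)) * real (d choose (d div 2)) = c / (4*(real e+1))"
    proof -
      have "1 / (real d * 2^(d+1)) * real (d choose (d div 2)) = (1 / 2^d * real (d choose (d div 2))) / (2 * real d)"
        by simp
      then show ?thesis unfolding bd rd by (simp add: field_simps)
    qed
    have Y: "2^(d-1) / (real d * real ((d-1) choose (d div 2))) = 1 / (2*(real e+1)*c)"
      unfolding dd rd c_def using Y_val[of e] by (simp add: add_ac)
    have Ssum: "(\<Sum>q=0..(d-2) div 2. (-1)^q * real (((d-2) div 2) choose q) / (2*real q + 1)) = S"
      unfolding dd S_def by (simp add: atLeast0AtMost)
    have "ccoef 0 d = C1 d 0 * Isum 0 e" using ccoef_eq[OF dpos, of 0] dd by simp
    also have "\<dots> = 1/2 * C1 d 0 * (c / (4*(real e+1)) + 1 / (2*(real e+1)*c) - 1/2 * S)"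
    proof -
      have "Isum 0 e = 1/2 * (c / (4*(real e+1)) + 1 / (2*(real e+1)*c) - 1/2 * S)"
        unfolding I0 S by (rule alg_k0) (use cp in auto)
      then show ?thesis by simp
    qed
    finally show ?thesis unfolding X Y Ssum .
  qed
  have P1: "ccoef 1 d = 1/2 * C1 d 1 *
      (\<Sum>q=1..1 + (d-2) div 2. C2 q d 1 *
         (1 / (2 * (2*real q + 1))
          + 1 / (4 * real q) * (1 - 1 / 2^(2*q) * real ((2*q) choose q))))"
    unfolding ccoef_eq[OF dpos] C2e dd(1) dd(2) case_one by simp
  have P2: "\<forall>k::nat. k \<ge> 2 \<longrightarrow> even k \<longrightarrow>
      ccoef k d = 1/2 * C1 d k *
      (\<Sum>q = nat \<lceil>real k / 2\<rceil>..k + (d-2) div 2. C2 q d k *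
         (-1 / (2 * (2*real q - real k + 1))
          + 1 / (2 * (2*real q - real k + 2))
            * (1 - 1 / 2^(2*q-k+2) * real ((2*q-k+2) choose ((2*q-k+2) div 2)))))"
  proof (intro allI impI)
    fix k :: nat assume k: "k \<ge> 2" "even k"
    show "ccoef k d = 1/2 * C1 d k *
      (\<Sum>q = nat \<lceil>real k / 2\<rceil>..k + (d-2) div 2. C2 q d k *
         (-1 / (2 * (2*real q - real k + 1))
          + 1 / (2 * (2*real q - real k + 2))
            * (1 - 1 / 2^(2*q-k+2) * real ((2*q-k+2) choose ((2*q-k+2) div 2)))))"
      unfolding ccoef_eq[OF dpos] C2e dd(1) dd(2) sum_ceil case_even[OF k(2) k(1) le_add1] by (simp add: mult_ac)
  qed
  have P3: "\<forall>k::nat. k \<ge> 3 \<longrightarrow> odd k \<longrightarrow>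
      ccoef k d = 1/2 * C1 d k *
      (\<Sum>q = nat \<lceil>real k / 2\<rceil>..k + (d-2) div 2. C2 q d k *
         (1 / (2 * (2*real q - real k + 1))
            * (1 - 1 / 2^(2*q-k+1) * real ((2*q-k+1) choose ((2*q-k+1) div 2)))))"
  proof (intro allI impI)
    fix k :: nat assume k: "k \<ge> 3" "odd k"
    show "ccoef k d = 1/2 * C1 d k *
      (\<Sum>q = nat \<lceil>real k / 2\<rceil>..k + (d-2) div 2. C2 q d k *
         (1 / (2 * (2*real q - real k + 1))
            * (1 - 1 / 2^(2*q-k+1) * real ((2*q-k+1) choose ((2*q-k+1) div 2)))))"
      unfolding ccoef_eq[OF dpos] C2e dd(1) dd(2) sum_ceil case_odd[OF k(2) k(1) le_add1] by (simp add: mult_ac)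
  qed
  show ?thesis using P0 P1 P2 P3 by blast
qed


end
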